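(* If $R\le\inf_{\lambda\in\Delta_{M(R)}}L\big(\sum_{(i,j)\in M(R)}\lambda_{ij}\tilde\beta_{ij}\big)$ (with the convention that the infimum over an empty index set is $+\infty$), then $\hat S$ is a B-set for the approachability problem with action sets $U=\Delta_K$, $V=(\Delta_{\mathcal X})^K$ and vector payoff $f(w,Q)=\big(\sum_{a}w(a)D(Q_a\|\nu^i_a)\big)_{i\in[m]}$; that is, for every $y\in\mathbb R^m\setminus\hat S$, with $\pi(y)$ its Euclidean projection onto $\hat S$, there exists $w\in\Delta_K$ such that $\langle y-\pi(y),f(w,Q)-\pi(y)\rangle\le0$ for all $Q\in(\Delta_{\mathcal X})^K$.
   Context: $\mathcal X$ finite, $\Delta_{\mathcal X}$ the distributions on $\mathcal X$, $\Delta_K,\Delta_m$ the probability simplices on $[K]$, $[m]$, $D$ the KL divergence; $m\ge2$ bandits $\nu^1,\dots,\nu^m$, $\nu^i=(\nu^i_a)_{a\in[K]}$, with all $\nu^i_a(x)>0$. For $\beta\in\Delta_m$ and $a\in[K]$ let $\phi_a(\beta)=-\log\sum_{x\in\mathcal X}\prod_{i=1}^m\nu^i_a(x)^{\beta_i}$, $I(\beta)=\min_a\phi_a(\beta)$, $L(\beta)=\max_a\phi_a(\beta)$. For $1\le i<j\le m$ and $b\in[0,1]$ let $\beta_{ij}(b)=b\,e_i+(1-b)e_j\in\Delta_m$. Given $R\in\mathbb R$, let $M(R)=\{(i,j):i<j,\ \sup_{b\in[0,1]}I(\beta_{ij}(b))<R\}$, and for each $(i,j)\in M(R)$ fix a point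 $\tilde\beta_{ij}=\beta_{ij}(b_{ij})$ for some $b_{ij}\in[0,1]$. Define $I'(\beta)=R$ if $\beta=\tilde\beta_{ij}$ for some $(i,j)\in M(R)$, and $I'(\beta)=I(\beta)$ otherwise; let $I'_{concave}$ be the upper concave envelope of $I'$ on $\Delta_m$ (the smallest concave function on $\Delta_m$ dominating $I'$ pointwise). Let $\hat S=\{x\in\mathbb R^m:\langle\beta,x\rangle\ge I'_{concave}(\beta)\ \forall\beta\in\Delta_m\}$. $\Delta_{M(R)}$ is the simplex of weights $\lambda=(\lambda_{ij})_{(i,j)\in M(R)}$. *)

theory Defs
  imports "HOL-Analysis.Analysis"
begin

definition distrs :: "('x::finite \<Rightarrow> real) set" where
  "distrs = {p. (\<forall>x. 0 \<le> p x) \<and> (\<Sum>x\<in>UNIV. p x) = 1}"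

definition simplexm :: "((real, 'm::finite) vec) set" where
  "simplexm = {b. (\<forall>i. 0 \<le> b $ i) \<and> (\<Sum>i\<in>UNIV. b $ i) = 1}"

definition KL :: "('x::finite \<Rightarrow> real) \<Rightarrow> ('x \<Rightarrow> real) \<Rightarrow> real" where
  "KL Q P = (\<Sum>x\<in>UNIV. if Q x = 0 then 0 else Q x * ln (Q x / P x))"

text \<open>nu i a x = \<nu>^i_a(x): bandit i, arm a, outcome x.\<close>
definition phi :: "('m::finite \<Rightarrow> 'a \<Rightarrow> 'x::finite \<Rightarrow> real) \<Rightarrow> 'a \<Rightarrow> (real, 'm) vec \<Rightarrow> real" where
  "phi nu a b = - ln (\<Sum>x\<in>UNIV. \<Prod>i\<in>UNIV. nu i a x powr (b $ i))"

definition Ifun :: "('m::finite \<Rightarrow> 'a::finite \<Rightarrow> 'x::finite \<Rightarrow> real) \<Rightarrow> (real, 'm) vec \<Rightarrow> real" where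
  "Ifun nu b = Min ((\<lambda>a. phi nu a b) ` UNIV)"

definition Lfun :: "('m::finite \<Rightarrow> 'a::finite \<Rightarrow> 'x::finite \<Rightarrow> real) \<Rightarrow> (real, 'm) vec \<Rightarrow> real" where
  "Lfun nu b = Max ((\<lambda>a. phi nu a b) ` UNIV)"

definition betaij :: "'m::finite \<Rightarrow> 'm \<Rightarrow> real \<Rightarrow> (real, 'm) vec" where
  "betaij i j t = t *\<^sub>R axis i 1 + (1 - t) *\<^sub>R axis j 1"

definition Mset :: "('m::{finite,linorder} \<Rightarrow> 'a::finite \<Rightarrow> 'x::finite \<Rightarrow> real) \<Rightarrow> real \<Rightarrow> ('m \<times> 'm) set" where
  "Mset nu R = {(i, j). i < j \<and> (SUP t\<in>{0..1}. Ifun nu (betaij i j t)) < R}"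

text \<open>I', with tilde-beta_{ij} = betaij i j (bsel i j).\<close>
definition Iprime :: "('m::{finite,linorder} \<Rightarrow> 'a::finite \<Rightarrow> 'x::finite \<Rightarrow> real) \<Rightarrow> real
    \<Rightarrow> ('m \<Rightarrow> 'm \<Rightarrow> real) \<Rightarrow> (real, 'm) vec \<Rightarrow> real" where
  "Iprime nu R bsel b =
     (if \<exists>(i, j)\<in>Mset nu R. b = betaij i j (bsel i j) then R else Ifun nu b)"

definition concave_env :: "((real, 'm::finite) vec \<Rightarrow> real) \<Rightarrow> (real, 'm) vec \<Rightarrow> real" where
  "concave_env g b = Inf {h b | h. concave_on simplexm h \<and> (\<forall>c\<in>simplexm. g c \<le> h c)}"

definition Shat :: "('m::{finite,linorder} \<Rightarrow> 'a::finite \<Rightarrow> 'x::finite \<Rightarrow> real) \<Rightarrow> real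
    \<Rightarrow> ('m \<Rightarrow> 'm \<Rightarrow> real) \<Rightarrow> ((real, 'm) vec) set" where
  "Shat nu R bsel = {y. \<forall>b\<in>simplexm. concave_env (Iprime nu R bsel) b \<le> inner b y}"

definition payoff :: "('m::finite \<Rightarrow> 'a::finite \<Rightarrow> 'x::finite \<Rightarrow> real) \<Rightarrow> ('a \<Rightarrow> real)
    \<Rightarrow> ('a \<Rightarrow> 'x \<Rightarrow> real) \<Rightarrow> (real, 'm) vec" where
  "payoff nu w Q = (\<chi> i. \<Sum>a\<in>UNIV. w a * KL (Q a) (nu i a))"

end

theory Submission
  imports Defs
begin

definition Gf :: "('m::finite \<Rightarrow> 'a \<Rightarrow> 'x::finite \<Rightarrow> real) \<Rightarrow> 'a \<Rightarrow> (real, 'm) vec \<Rightarrow> 'x \<Rightarrow> real" where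
  "Gf nu a b x = (\<Prod>i\<in>UNIV. nu i a x powr (b $ i))"

lemma Gf_pos: assumes "\<And>i a x. nu i a x > 0" shows "Gf nu a b x > 0"
  unfolding Gf_def using assms by (intro prod_pos) (metis less_irrefl powr_gt_zero)

lemma Zpos: assumes "\<And>i a x. nu i a x > 0" shows "(\<Sum>x\<in>UNIV. Gf nu a b x) > 0"
  using Gf_pos[of nu, OF assms] by (intro sum_pos) auto

lemma phi_Gf: "phi nu a b = - ln (\<Sum>x\<in>UNIV. Gf nu a b x)"
  unfolding phi_def Gf_def by simp

lemma Gf_comb:
  assumes pos: "\<And>i a x. nu i a x > 0"
  shows "Gf nu a (u *\<^sub>R b + v *\<^sub>R c) x = Gf nu a b x powr u * Gf nu a c x powr v"
proof -
  have "Gf nu a (u *\<^sub>R b + v *\<^sub>R c) x = (\<Prod>i\<in>UNIV. (nu i a x powr (b $ i)) powr u * (nu i a x powr (c $ i)) powr v)"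
    unfolding Gf_def using pos
    by (intro prod.cong refl) (simp add: powr_powr powr_add mult.commute)
  also have "\<dots> = Gf nu a b x powr u * Gf nu a c x powr v"
    unfolding Gf_def prod.distrib using pos
    by (subst (1 2) prod_powr_distrib) (auto intro: less_imp_le)
  finally show ?thesis .
qed

lemma holder_Z:
  assumes pos: "\<And>i a x. nu i a x > 0" and u: "0 \<le> u" "0 \<le> v" "u + v = 1"
  shows "(\<Sum>x\<in>UNIV. Gf nu a (u *\<^sub>R b + v *\<^sub>R c) x) \<le>
     (\<Sum>x\<in>UNIV. Gf nu a b x) powr u * (\<Sum>x\<in>UNIV. Gf nu a c x) powr v"
proof -
  define A where "A = (\<Sum>x\<in>UNIV. Gf nu a b x)"
  define B where "B = (\<Sum>x\<in>UNIV. Gf nu a c x)"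
  have A: "A > 0" and B: "B > 0" unfolding A_def B_def using Zpos[of nu, OF pos] by auto
  have "(\<Sum>x\<in>UNIV. Gf nu a (u *\<^sub>R b + v *\<^sub>R c) x)
      = (\<Sum>x\<in>UNIV. A powr u * B powr v * ((Gf nu a b x / A) powr u * (Gf nu a c x / B) powr v))"
    using A B Gf_pos[of nu, OF pos]
    by (intro sum.cong refl) (simp add: Gf_comb[OF pos] powr_divide less_imp_le)
  also have "\<dots> \<le> (\<Sum>x\<in>UNIV. A powr u * B powr v * (u * (Gf nu a b x / A) + v * (Gf nu a c x / B)))"
    using A B Gf_pos[of nu, OF pos] u
    by (intro sum_mono mult_left_mono Youngs_inequality_0) auto
  also have "\<dots> = A powr u * B powr v * (u * ((\<Sum>x\<in>UNIV. Gf nu a b x) / A) + v * ((\<Sum>x\<in>UNIV. Gf nu a c x) / B))"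
  proof -
    have "(\<Sum>x\<in>UNIV. u * (Gf nu a b x / A) + v * (Gf nu a c x / B)) = u * ((\<Sum>x\<in>UNIV. Gf nu a b x) / A) + v * ((\<Sum>x\<in>UNIV. Gf nu a c x) / B)"
      by (simp add: sum.distrib sum_distrib_left sum_divide_distrib)
    thus ?thesis by (simp add: sum_distrib_left[symmetric])
  qed
  also have "\<dots> = A powr u * B powr v" using A B u by (simp add: A_def[symmetric] B_def[symmetric])
  finally show ?thesis unfolding A_def B_def .
qed

lemma phi_concave:
  assumes pos: "\<And>i a x. nu i a x > 0" and u: "0 \<le> u" "0 \<le> v" "u + v = 1"
  shows "u * phi nu a b + v * phi nu a c \<le> phi nu a (u *\<^sub>R b + v *\<^sub>R c)"
proof -
  define A where "A = (\<Sum>x\<in>UNIV. Gf nu a b x)"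
  define B where "B = (\<Sum>x\<in>UNIV. Gf nu a c x)"
  define C where "C = (\<Sum>x\<in>UNIV. Gf nu a (u *\<^sub>R b + v *\<^sub>R c) x)"
  have A: "A > 0" and B: "B > 0" and C: "C > 0" unfolding A_def B_def C_def using Zpos[of nu, OF pos] by auto
  have "C \<le> A powr u * B powr v" unfolding A_def B_def C_def by (rule holder_Z[OF pos u])
  hence "ln C \<le> ln (A powr u * B powr v)" using C by simp
  also have "\<dots> = u * ln A + v * ln B" using A B by (simp add: ln_mult ln_powr)
  finally show ?thesis unfolding phi_Gf A_def[symmetric] B_def[symmetric] C_def[symmetric]
    by simp
qed

lemma gibbs:
  assumes pos: "\<And>i a x. nu i a x > 0" and beta: "beta \<in> simplexm" and Q: "Q \<in> distrs"
  shows "phi nu a beta \<le> (\<Sum>i\<in>UNIV. beta $ i * KL Q (nu i a))"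
proof -
  define G where "G = Gf nu a beta"
  define Z where "Z = (\<Sum>x\<in>UNIV. G x)"
  have Gp: "\<And>x. G x > 0" unfolding G_def using Gf_pos[of nu, OF pos] by auto
  have Zp: "Z > 0" unfolding Z_def G_def using Zpos[of nu, OF pos] by auto
  have b0: "\<And>i. 0 \<le> beta $ i" and b1: "(\<Sum>i\<in>UNIV. beta $ i) = 1" using beta unfolding simplexm_def by auto
  have q0: "\<And>x. 0 \<le> Q x" and q1: "(\<Sum>x\<in>UNIV. Q x) = 1" using Q unfolding distrs_def by auto
  have lnG: "ln (G x) = (\<Sum>i\<in>UNIV. beta $ i * ln (nu i a x))" for x
  proof -
    have "ln (G x) = (\<Sum>i\<in>UNIV. ln (nu i a x powr (beta $ i)))"
    proof -
      have "\<And>i. 0 < nu i a x powr (beta $ i)" using pos by (metis less_irrefl powr_gt_zero)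
      thus ?thesis unfolding G_def Gf_def by (subst ln_prod) auto
    qed
    moreover have "\<And>i. nu i a x \<noteq> 0" using pos by (metis less_irrefl)
    ultimately show ?thesis by (simp add: ln_powr)
  qed
  have "(\<Sum>i\<in>UNIV. beta $ i * KL Q (nu i a)) =
     (\<Sum>x\<in>UNIV. \<Sum>i\<in>UNIV. beta $ i * (if Q x = 0 then 0 else Q x * ln (Q x / nu i a x)))"
    unfolding KL_def sum_distrib_left by (rule sum.swap)
  also have "\<dots> = (\<Sum>x\<in>UNIV. if Q x = 0 then 0 else Q x * (ln (Q x) - ln (G x)))"
  proof (intro sum.cong refl)
    fix x
    show "(\<Sum>i\<in>UNIV. beta $ i * (if Q x = 0 then 0 else Q x * ln (Q x / nu i a x))) =
        (if Q x = 0 then 0 else Q x * (ln (Q x) - ln (G x)))"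
    proof (cases "Q x = 0")
      case False
      hence "Q x > 0" using q0[of x] by auto
      hence "(\<Sum>i\<in>UNIV. beta $ i * (Q x * ln (Q x / nu i a x)))
          = (\<Sum>i\<in>UNIV. beta $ i * (Q x * ln (Q x)) - Q x * (beta $ i * ln (nu i a x)))"
      proof (intro sum.cong refl)
        fix i
        have "ln (Q x / nu i a x) = ln (Q x) - ln (nu i a x)" using pos[of i a x] \<open>Q x > 0\<close> by (simp add: ln_div)
        thus "beta $ i * (Q x * ln (Q x / nu i a x)) = beta $ i * (Q x * ln (Q x)) - Q x * (beta $ i * ln (nu i a x))"
          by (simp only: right_diff_distrib mult.assoc mult.left_commute)
      qed
      also have "\<dots> = Q x * (ln (Q x) - ln (G x))"
      proof -
        have "(\<Sum>i\<in>UNIV. beta $ i * (Q x * ln (Q x))) = Q x * ln (Q x)"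
          by (simp add: sum_distrib_right[symmetric] b1)
        moreover have "(\<Sum>i\<in>UNIV. Q x * (beta $ i * ln (nu i a x))) = Q x * ln (G x)"
          by (simp add: sum_distrib_left[symmetric] lnG)
        ultimately show ?thesis unfolding sum_subtractf by (simp add: right_diff_distrib)
      qed
      finally show ?thesis using False by simp
    qed simp
  qed
  also have "\<dots> \<ge> (\<Sum>x\<in>UNIV. Q x * (- ln Z) + (Q x - G x / Z))"
  proof (intro sum_mono)
    fix x
    show "Q x * (- ln Z) + (Q x - G x / Z) \<le> (if Q x = 0 then 0 else Q x * (ln (Q x) - ln (G x)))"
    proof (cases "Q x = 0")
      case True thus ?thesis using Gp[of x] Zp by simp
    next
      case False
      hence qp: "Q x > 0" using q0[of x] by auto
      define t where "t = G x / (Q x * Z)"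
      have tp: "t > 0" unfolding t_def using qp Gp[of x] Zp by simp
      have "ln t \<le> t - 1" using ln_le_minus_one tp by simp
      hence "Q x * ln t \<le> Q x * (t - 1)" using qp by (intro mult_left_mono) auto
      moreover have "ln t = ln (G x) - ln (Q x) - ln Z" unfolding t_def using qp Gp[of x] Zp
        by (simp add: ln_div ln_mult)
      moreover have "Q x * (t - 1) = G x / Z - Q x" unfolding t_def using qp Zp by (simp add: field_simps)
      ultimately show ?thesis using False by (simp add: algebra_simps)
    qed
  qed
  also have "(\<Sum>x\<in>UNIV. Q x * (- ln Z) + (Q x - G x / Z)) = - ln Z"
  proof -
    have "(\<Sum>x\<in>UNIV. Q x * (- ln Z) + (Q x - G x / Z)) = (\<Sum>x\<in>UNIV. Q x) * (- ln Z) + ((\<Sum>x\<in>UNIV. Q x) - (\<Sum>x\<in>UNIV. G x) / Z)"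
      by (simp only: sum.distrib sum_subtractf sum_distrib_right sum_divide_distrib)
    thus ?thesis using Zp by (simp add: q1 Z_def[symmetric])
  qed
  finally show ?thesis unfolding phi_Gf G_def[symmetric] Z_def[symmetric] by simp
qed

lemma inner_vec_sum: "inner (b::(real,'m::finite) vec) z = (\<Sum>i\<in>UNIV. b $ i * z $ i)"
  by (simp add: inner_vec_def)

lemma simplexm_iff: "b \<in> simplexm \<longleftrightarrow> (\<forall>i. 0 \<le> b $ i) \<and> (\<Sum>i\<in>UNIV. b $ i) = 1"
  unfolding simplexm_def by simp

lemma convex_simplexm: "convex (simplexm :: ((real, 'm::finite) vec) set)"
  unfolding convex_def
  by (auto simp: simplexm_iff sum.distrib sum_distrib_left[symmetric])

lemma closed_simplexm: "closed (simplexm :: ((real, 'm::finite) vec) set)"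
proof -
  have "simplexm = {b::(real,'m) vec. \<forall>i. 0 \<le> b $ i} \<inter> {b. (\<Sum>i\<in>UNIV. b $ i) = 1}"
    unfolding simplexm_def by auto
  moreover have "closed {b::(real,'m) vec. \<forall>i. 0 \<le> b $ i}"
    by (intro closed_Collect_all closed_Collect_le continuous_intros)
  moreover have "closed {b::(real,'m) vec. (\<Sum>i\<in>UNIV. b $ i) = 1}"
    by (intro closed_Collect_eq continuous_intros)
  ultimately show ?thesis by (metis closed_Int)
qed

lemma betaij_simplexm: "t \<in> {0..1} \<Longrightarrow> betaij i j t \<in> simplexm"
  unfolding simplexm_iff betaij_def axis_def by (auto simp: sum.distrib sum_distrib_left[symmetric])

lemma phi_cont:
  fixes nu :: "'m::finite \<Rightarrow> 'a \<Rightarrow> 'x::finite \<Rightarrow> real"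
  assumes pos: "\<And>i a x. nu i a x > 0"
  shows "continuous_on UNIV (phi nu a)"
proof -
  have "\<And>b. (\<Sum>x\<in>UNIV. \<Prod>i\<in>UNIV. nu i a x powr (b $ i)) > 0"
    using Zpos[of nu, OF pos] unfolding Gf_def by auto
  hence "continuous_on UNIV (\<lambda>b. - ln (\<Sum>x\<in>UNIV. \<Prod>i\<in>UNIV. nu i a x powr ((b::(real,'m) vec) $ i)))"
    using pos by (auto intro!: continuous_intros simp: less_imp_neq[symmetric])
  thus ?thesis unfolding phi_def[abs_def] .
qed

lemma in_Shat:
  fixes nu :: "'m::{finite,linorder} \<Rightarrow> 'a::finite \<Rightarrow> 'x::finite \<Rightarrow> real"
  assumes "\<forall>c\<in>simplexm. Iprime nu R bsel c \<le> inner c z"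
  shows "z \<in> Shat nu R bsel"
  unfolding Shat_def
proof (intro CollectI ballI)
  fix b :: "(real,'m) vec" assume b: "b \<in> simplexm"
  have conc: "concave_on simplexm (\<lambda>c. inner c z)"
    unfolding concave_on_iff using convex_simplexm by (simp add: inner_add_left)
  show "concave_env (Iprime nu R bsel) b \<le> inner b z"
    unfolding concave_env_def
  proof (rule cInf_lower)
    show "inner b z \<in> {h b |h. concave_on simplexm h \<and> (\<forall>c\<in>simplexm. Iprime nu R bsel c \<le> h c)}"
      using conc assms by (intro CollectI exI[of _ "\<lambda>c. inner c z"]) simp
    show "bdd_below {h b |h. concave_on simplexm h \<and> (\<forall>c\<in>simplexm. Iprime nu R bsel c \<le> h c)}"
      using b by (intro bdd_belowI[of _ "Iprime nu R bsel b"]) auto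
  qed
qed

lemma Shat_eq: "Shat nu R bsel = (\<Inter>b\<in>simplexm. {y. inner b y \<ge> concave_env (Iprime nu R bsel) b})"
  unfolding Shat_def by auto

lemma closed_Shat: "closed (Shat nu R bsel)"
  unfolding Shat_eq by (intro closed_INT ballI closed_halfspace_ge)

lemma convex_Shat: "convex (Shat nu R bsel)"
  unfolding Shat_eq by (intro convex_INT ballI convex_halfspace_ge)

lemma Shat_up:
  fixes nu :: "'m::{finite,linorder} \<Rightarrow> 'a::finite \<Rightarrow> 'x::finite \<Rightarrow> real"
  assumes "p \<in> Shat nu R bsel"
  shows "p + axis i 1 \<in> Shat nu R bsel"
  unfolding Shat_def
proof (intro CollectI ballI)
  fix b :: "(real,'m) vec" assume b: "b \<in> simplexm"
  have "concave_env (Iprime nu R bsel) b \<le> inner b p" using assms b unfolding Shat_def by auto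
  moreover have "inner b (axis i 1) \<ge> 0" using b unfolding simplexm_iff by (simp add: inner_axis)
  ultimately show "concave_env (Iprime nu R bsel) b \<le> inner b (p + axis i 1)"
    by (simp add: inner_add_right)
qed

lemma Ifun_le: "Ifun nu b \<le> phi nu a b"
  unfolding Ifun_def by (rule Min_le) auto

lemma Lfun_ge: "phi nu a b \<le> Lfun nu b"
  unfolding Lfun_def by (rule Max_ge) auto

lemma Lfun_ex: "\<exists>a. Lfun nu b = phi nu a b"
proof -
  have "Lfun nu b \<in> (\<lambda>a. phi nu a b) ` UNIV" unfolding Lfun_def by (rule Max_in) auto
  thus ?thesis by auto
qed

lemma key:
  fixes nu :: "'m::{finite,linorder} \<Rightarrow> 'a::finite \<Rightarrow> 'x::finite \<Rightarrow> real"
    and R :: real and bsel :: "'m \<Rightarrow> 'm \<Rightarrow> real"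
  assumes pos: "\<And>i a x. nu i a x > 0"
    and bsel: "\<And>i j. (i, j) \<in> Mset nu R \<Longrightarrow> bsel i j \<in> {0..1}"
    and hyp: "\<And>lam. (\<forall>p\<in>Mset nu R. 0 \<le> lam p) \<Longrightarrow> (\<Sum>p\<in>Mset nu R. lam p) = 1 \<Longrightarrow>
               R \<le> Lfun nu (\<Sum>(i, j)\<in>Mset nu R. lam (i, j) *\<^sub>R betaij i j (bsel i j))"
    and beta: "beta \<in> simplexm" and e: "e > 0"
  shows "\<exists>z\<in>Shat nu R bsel. inner beta z < Lfun nu beta + e"
proof -
  define M where "M = Mset nu R"
  define tb where "tb = (\<lambda>p::'m\<times>'m. betaij (fst p) (snd p) (bsel (fst p) (snd p)))"
  have hyp': "R \<le> Lfun nu (\<Sum>p\<in>M. lam p *\<^sub>R tb p)" if "\<forall>p\<in>M. 0 \<le> lam p" "sum lam M = 1" for lam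
    using hyp[of lam] that unfolding M_def tb_def by (simp add: case_prod_beta)
  define A where "A = {(b, r::real). b \<in> simplexm \<and> (\<forall>a. r \<le> phi nu a b)}"
  define B where "B = {(\<Sum>p\<in>M. lam p *\<^sub>R tb p, r) | lam r. (\<forall>p\<in>M. 0 \<le> lam p) \<and> sum lam M = 1 \<and> r \<le> R}"
  define D where "D = {(b, r::real). b \<in> simplexm \<and> (\<exists>a. r \<le> phi nu a b)}"
  have tbS: "tb p \<in> simplexm" if "p \<in> M" for p
    using bsel[of "fst p" "snd p"] that unfolding tb_def M_def by (intro betaij_simplexm) auto
  have convA: "convex A"
    unfolding convex_def A_def
  proof (clarsimp)
    fix b r b' r' and u v :: real
    assume h: "b \<in> simplexm" "\<forall>a. r \<le> phi nu a b" "b' \<in> simplexm" "\<forall>a. r' \<le> phi nu a b'"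
      "0 \<le> u" "0 \<le> v" "u + v = 1"
    show "u *\<^sub>R b + v *\<^sub>R b' \<in> simplexm \<and> (\<forall>a. u * r + v * r' \<le> phi nu a (u *\<^sub>R b + v *\<^sub>R b'))"
    proof (intro conjI allI)
      show "u *\<^sub>R b + v *\<^sub>R b' \<in> simplexm"
        using convex_simplexm h unfolding convex_def by blast
      fix a
      have "u * r + v * r' \<le> u * phi nu a b + v * phi nu a b'"
        using h by (intro add_mono mult_left_mono) auto
      also have "\<dots> \<le> phi nu a (u *\<^sub>R b + v *\<^sub>R b')"
        using h by (intro phi_concave pos) auto
      finally show "u * r + v * r' \<le> phi nu a (u *\<^sub>R b + v *\<^sub>R b')" .
    qed
  qed
  have convB: "convex B"
  proof (unfold convex_def, intro ballI allI impI)
    fix x y and u v :: real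
    assume x: "x \<in> B" and y: "y \<in> B" and uv: "0 \<le> u" "0 \<le> v" "u + v = 1"
    obtain lam r where lx: "x = (\<Sum>p\<in>M. lam p *\<^sub>R tb p, r)" "\<forall>p\<in>M. 0 \<le> lam p" "sum lam M = 1" "r \<le> R"
      using x unfolding B_def by blast
    obtain lam' r' where ly: "y = (\<Sum>p\<in>M. lam' p *\<^sub>R tb p, r')" "\<forall>p\<in>M. 0 \<le> lam' p" "sum lam' M = 1" "r' \<le> R"
      using y unfolding B_def by blast
    define l2 where "l2 = (\<lambda>p. u * lam p + v * lam' p)"
    have e1: "u *\<^sub>R x + v *\<^sub>R y = (\<Sum>p\<in>M. l2 p *\<^sub>R tb p, u * r + v * r')"
      unfolding l2_def lx ly by (simp add: scaleR_sum_right sum.distrib scaleR_add_left)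
    moreover have "\<forall>p\<in>M. 0 \<le> l2 p" unfolding l2_def using lx ly uv by auto
    moreover have "sum l2 M = 1" unfolding l2_def using lx ly uv by (simp add: sum.distrib sum_distrib_left[symmetric])
    moreover have "u * r + v * r' \<le> R"
    proof -
      have "u * r + v * r' \<le> u * R + v * R" using lx ly uv by (intro add_mono mult_left_mono) auto
      thus ?thesis using uv by (simp add: distrib_right[symmetric])
    qed
    ultimately show "u *\<^sub>R x + v *\<^sub>R y \<in> B" unfolding B_def by blast
  qed
  have BS: "b \<in> simplexm \<and> r \<le> R \<and> (\<exists>a. R \<le> phi nu a b)" if bB: "(b, r) \<in> B" for b r
  proof -
    obtain lam where l: "b = (\<Sum>p\<in>M. lam p *\<^sub>R tb p)" "\<forall>p\<in>M. 0 \<le> lam p" "sum lam M = 1" "r \<le> R"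
      using bB unfolding B_def by fastforce
    have "b \<in> simplexm" unfolding l(1) using l tbS by (intro convex_sum convex_simplexm) auto
    moreover obtain a where "Lfun nu b = phi nu a b" using Lfun_ex by blast
    moreover have "R \<le> Lfun nu b" unfolding l(1) using hyp' l by auto
    ultimately show ?thesis using l by auto
  qed
  have mix: "u *\<^sub>R x + v *\<^sub>R w \<in> D" if hm: "x \<in> A" "w \<in> B" "0 \<le> u" "0 \<le> v" "u + v = 1" for x w u v
  proof -
    obtain b1 r1 where x: "x = (b1, r1)" by force
    obtain b2 r2 where w: "w = (b2, r2)" by force
    have A1: "b1 \<in> simplexm" "\<forall>a. r1 \<le> phi nu a b1" using hm(1) unfolding x A_def by auto
    obtain a where a: "R \<le> phi nu a b2" and b2: "b2 \<in> simplexm" and r2: "r2 \<le> R" using BS hm(2) unfolding w by blast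
    have "u * r1 + v * r2 \<le> u * phi nu a b1 + v * phi nu a b2"
      using A1 a r2 hm by (intro add_mono mult_left_mono) auto
    also have "\<dots> \<le> phi nu a (u *\<^sub>R b1 + v *\<^sub>R b2)"
      using hm by (intro phi_concave pos) auto
    finally have "u * r1 + v * r2 \<le> phi nu a (u *\<^sub>R b1 + v *\<^sub>R b2)" .
    moreover have "u *\<^sub>R b1 + v *\<^sub>R b2 \<in> simplexm"
      using convex_simplexm A1 b2 hm unfolding convex_def by blast
    ultimately show ?thesis unfolding x w D_def by auto
  qed
  have AD: "A \<subseteq> D" unfolding A_def D_def by auto
  have BD: "B \<subseteq> D" unfolding D_def using BS by (fastforce intro: order_trans)
  have hullD: "convex hull (A \<union> B) \<subseteq> D"
  proof
    fix q assume "q \<in> convex hull (A \<union> B)"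
    then obtain s u where s: "finite s" "s \<subseteq> A \<union> B" "\<forall>x\<in>s. 0 \<le> u x" "sum u s = 1"
      "(\<Sum>v\<in>s. u v *\<^sub>R v) = q"
      unfolding convex_hull_explicit by auto
    define sA where "sA = s \<inter> A"
    define sB where "sB = s - A"
    have fin: "finite sA" "finite sB" using s unfolding sA_def sB_def by auto
    have sBB: "sB \<subseteq> B" using s unfolding sB_def by auto
    have disj: "sA \<inter> sB = {}" and un: "s = sA \<union> sB" unfolding sA_def sB_def by auto
    define mA where "mA = sum u sA"
    define mB where "mB = sum u sB"
    have m1: "mA + mB = 1" unfolding mA_def mB_def using s(4) un disj fin by (simp add: sum.union_disjoint[symmetric])
    have mA0: "mA \<ge> 0" unfolding mA_def using s(3) un by (intro sum_nonneg) auto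
    have mB0: "mB \<ge> 0" unfolding mB_def using s(3) un by (intro sum_nonneg) auto
    define xA where "xA = (\<Sum>v\<in>sA. (u v / mA) *\<^sub>R v)"
    define xB where "xB = (\<Sum>v\<in>sB. (u v / mB) *\<^sub>R v)"
    have qs: "q = (\<Sum>v\<in>sA. u v *\<^sub>R v) + (\<Sum>v\<in>sB. u v *\<^sub>R v)"
      using s(5) un disj fin by (simp add: sum.union_disjoint[symmetric])
    have sAs: "sA \<subseteq> s" "sA \<subseteq> A" "sB \<subseteq> s" unfolding sA_def sB_def by auto
    have xA_in: "xA \<in> A" if mp: "mA > 0"
      unfolding xA_def
    proof (rule convex_sum[OF fin(1) convA])
      show "(\<Sum>v\<in>sA. u v / mA) = 1" using mp by (simp add: sum_divide_distrib[symmetric] mA_def[symmetric])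
      show "\<And>v. v \<in> sA \<Longrightarrow> 0 \<le> u v / mA" using mp s(3) sAs by (meson divide_nonneg_pos subsetD)
      show "\<And>v. v \<in> sA \<Longrightarrow> v \<in> A" using sAs by blast
    qed
    have xB_in: "xB \<in> B" if mp: "mB > 0"
      unfolding xB_def
    proof (rule convex_sum[OF fin(2) convB])
      show "(\<Sum>v\<in>sB. u v / mB) = 1" using mp by (simp add: sum_divide_distrib[symmetric] mB_def[symmetric])
      show "\<And>v. v \<in> sB \<Longrightarrow> 0 \<le> u v / mB" using mp s(3) sAs by (meson divide_nonneg_pos subsetD)
      show "\<And>v. v \<in> sB \<Longrightarrow> v \<in> B" using sBB by blast
    qed
    have sA_eq: "(\<Sum>v\<in>sA. u v *\<^sub>R v) = mA *\<^sub>R xA" if "mA > 0"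
      unfolding xA_def scaleR_sum_right using that by (intro sum.cong refl) auto
    have sB_eq: "(\<Sum>v\<in>sB. u v *\<^sub>R v) = mB *\<^sub>R xB" if "mB > 0"
      unfolding xB_def scaleR_sum_right using that by (intro sum.cong refl) auto
    have zA: "(\<Sum>v\<in>sA. u v *\<^sub>R v) = 0" if "mA = 0"
    proof -
      have "\<forall>v\<in>sA. u v = 0" using that fin s(3) un unfolding mA_def
        by (subst sum_nonneg_eq_0_iff[symmetric]) auto
      thus ?thesis by simp
    qed
    have zB: "(\<Sum>v\<in>sB. u v *\<^sub>R v) = 0" if "mB = 0"
    proof -
      have "\<forall>v\<in>sB. u v = 0" using that fin s(3) un unfolding mB_def
        by (subst sum_nonneg_eq_0_iff[symmetric]) auto
      thus ?thesis by simp
    qed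
    show "q \<in> D"
    proof (cases "mA = 0")
      case True
      hence "mB = 1" using m1 by simp
      hence "q = xB" using True qs zA sB_eq by simp
      thus ?thesis using \<open>mB = 1\<close> xB_in BD by auto
    next
      case False
      hence mAp: "mA > 0" using mA0 by simp
      show ?thesis
      proof (cases "mB = 0")
        case True
        hence "mA = 1" using m1 by simp
        hence "q = xA" using True qs zB sA_eq by simp
        thus ?thesis using \<open>mA = 1\<close> xA_in AD by auto
      next
        case False
        hence "mB > 0" using mB0 by simp
        hence "q = mA *\<^sub>R xA + mB *\<^sub>R xB" using qs sA_eq[OF mAp] sB_eq by simp
        thus ?thesis using mix[OF xA_in[OF mAp] xB_in[OF \<open>mB > 0\<close>] mA0 mB0 m1] by simp
      qed
    qed
  qed
  have closedD: "closed D"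
  proof -
    have "D = (\<Union>a. {q. fst q \<in> simplexm} \<inter> {q. snd q \<le> phi nu a (fst q)})"
      unfolding D_def by auto
    moreover have "closed {q::(real,'m) vec \<times> real. fst q \<in> simplexm}"
      using closed_simplexm by (intro closed_vimage_fst[unfolded vimage_def]) 
    moreover have "closed {q::(real,'m) vec \<times> real. snd q \<le> phi nu a (fst q)}" for a
      by (intro closed_Collect_le continuous_intros continuous_on_compose2[OF phi_cont[OF pos]]) auto
    ultimately show ?thesis by (auto intro!: closed_UN closed_Int)
  qed
  define C where "C = closure (convex hull (A \<union> B))"
  have CD: "C \<subseteq> D" unfolding C_def using hullD closedD by (rule closure_minimal)
  have convC: "convex C" unfolding C_def by (intro convex_closure convex_convex_hull)
  have closedC: "closed C" unfolding C_def by simp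
  have ABC: "A \<union> B \<subseteq> C" unfolding C_def using hull_subset[of "A \<union> B" convex] closure_subset[of "convex hull (A \<union> B)"] by (rule subset_trans)
  have qD: "(beta, Lfun nu beta + e) \<notin> D"
    using Lfun_ge[of nu _ beta] e unfolding D_def by (auto simp: not_le) (smt (verit) Lfun_ge)
  hence "(beta, Lfun nu beta + e) \<notin> C" using CD by auto
  then obtain aa c where sep: "inner aa (beta, Lfun nu beta + e) < c" "\<forall>x\<in>C. inner aa x > c"
    using separating_hyperplane_closed_point[OF convC closedC] by blast
  obtain a1 a0 where aa: "aa = (a1, a0)" by force
  have sep1: "inner a1 beta + a0 * (Lfun nu beta + e) < c" using sep(1) unfolding aa by simp
  have sep2: "inner a1 b + a0 * r > c" if "(b, r) \<in> A \<union> B" for b r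
  proof -
    have "(b, r) \<in> C" using ABC that by blast
    hence "c < inner (a1, a0) (b, r)" using sep(2) unfolding aa by blast
    thus ?thesis by simp
  qed
  have "(beta, Ifun nu beta) \<in> A" unfolding A_def using beta Ifun_le by auto
  hence s3: "inner a1 beta + a0 * Ifun nu beta > c" using sep2 by auto
  obtain a' where "Lfun nu beta = phi nu a' beta" using Lfun_ex by blast
  hence IL: "Ifun nu beta \<le> Lfun nu beta" using Ifun_le by metis
  have a0n: "a0 < 0"
  proof (rule ccontr)
    assume "\<not> a0 < 0"
    hence "a0 * Ifun nu beta \<le> a0 * (Lfun nu beta + e)" using IL e by (intro mult_left_mono) auto
    thus False using sep1 s3 by linarith
  qed
  define z where "z = (\<chi> i. (c - a1 $ i) / a0)"
  have innz: "inner b z = (c - inner a1 b) / a0" if "b \<in> simplexm" for b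
  proof -
    have "inner b z = (\<Sum>i\<in>UNIV. b $ i * c - a1 $ i * b $ i) / a0"
      unfolding z_def inner_vec_sum by (simp add: sum_divide_distrib algebra_simps)
    also have "\<dots> = (c - inner a1 b) / a0"
      using that unfolding simplexm_iff inner_vec_sum
      by (simp add: sum_subtractf sum_distrib_right[symmetric])
    finally show ?thesis .
  qed
  have below: "r < inner b z" if "(b, r) \<in> A \<union> B" "b \<in> simplexm" for b r
  proof -
    have "a0 * r > c - inner a1 b" using sep2[OF that(1)] by simp
    hence "r < (c - inner a1 b) / a0" using a0n by (simp add: neg_less_divide_eq mult.commute)
    thus ?thesis using innz[OF that(2)] by simp
  qed
  have zS: "z \<in> Shat nu R bsel"
  proof (rule in_Shat, intro ballI)
    fix b :: "(real,'m) vec" assume b: "b \<in> simplexm"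
    show "Iprime nu R bsel b \<le> inner b z"
    proof (cases "\<exists>(i, j)\<in>Mset nu R. b = betaij i j (bsel i j)")
      case True
      then obtain i j where ij: "(i, j) \<in> M" "b = betaij i j (bsel i j)" unfolding M_def by auto
      define lam where "lam = (\<lambda>p. if p = (i, j) then 1 else (0::real))"
      have "(\<Sum>p\<in>M. lam p *\<^sub>R tb p) = b"
        unfolding lam_def using ij by (simp add: if_distrib[of "\<lambda>x. x *\<^sub>R _"] sum.delta' tb_def cong: if_cong)
      moreover have "\<forall>p\<in>M. 0 \<le> lam p" "sum lam M = 1" unfolding lam_def using ij by (auto simp: sum.delta')
      ultimately have "(b, R) \<in> B" unfolding B_def by blast
      hence "R < inner b z" using below b by auto
      thus ?thesis using True unfolding Iprime_def by auto
    next
      case False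
      have "(b, Ifun nu b) \<in> A" unfolding A_def using b Ifun_le by auto
      hence "Ifun nu b < inner b z" using below b by auto
      thus ?thesis using False unfolding Iprime_def by auto
    qed
  qed
  have "a0 * (Lfun nu beta + e) < c - inner a1 beta" using sep1 by simp
  hence "(c - inner a1 beta) / a0 < Lfun nu beta + e" using a0n by (simp add: neg_divide_less_eq mult.commute)
  hence "inner beta z < Lfun nu beta + e" using innz[OF beta] by simp
  thus ?thesis using zS by blast
qed

theorem mainTheorem14:
  fixes nu :: "'m::{finite,linorder} \<Rightarrow> 'a::finite \<Rightarrow> 'x::finite \<Rightarrow> real"
    and R :: real and bsel :: "'m \<Rightarrow> 'm \<Rightarrow> real"
  assumes m2: "CARD('m) \<ge> 2"
    and nu_distr: "\<And>i a. nu i a \<in> distrs"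
    and nu_pos: "\<And>i a x. nu i a x > 0"
    and bsel: "\<And>i j. (i, j) \<in> Mset nu R \<Longrightarrow> bsel i j \<in> {0..1}"
    and hyp: "\<And>lam. (\<forall>p\<in>Mset nu R. 0 \<le> lam p) \<Longrightarrow> (\<Sum>p\<in>Mset nu R. lam p) = 1 \<Longrightarrow>
               R \<le> Lfun nu (\<Sum>(i, j)\<in>Mset nu R. lam (i, j) *\<^sub>R betaij i j (bsel i j))"
  shows "\<forall>y. y \<notin> Shat nu R bsel \<longrightarrow>
           (\<exists>w\<in>distrs. \<forall>Q. (\<forall>a. Q a \<in> distrs) \<longrightarrow>
              inner (y - closest_point (Shat nu R bsel) y)
                    (payoff nu w Q - closest_point (Shat nu R bsel) y) \<le> 0)"
proof (intro allI impI)
  fix y assume yS: "y \<notin> Shat nu R bsel"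
  define S where "S = Shat nu R bsel"
  have key': "\<exists>z\<in>S. inner beta z < Lfun nu beta + e" if "beta \<in> simplexm" "e > 0" for beta e
    unfolding S_def using key[OF nu_pos bsel hyp that] by blast
  have clS: "closed S" and cvS: "convex S" unfolding S_def by (rule closed_Shat, rule convex_Shat)
  obtain i0 :: 'm where True by blast
  have "betaij i0 i0 1 \<in> simplexm" by (rule betaij_simplexm) auto
  then obtain z0 where "z0 \<in> S" using key'[of _ 1] by auto
  hence Sne: "S \<noteq> {}" by auto
  define p where "p = closest_point S y"
  have pS: "p \<in> S" unfolding p_def using clS Sne by (rule closest_point_in_set)
  have dot: "inner (y - p) (z - p) \<le> 0" if "z \<in> S" for z
    unfolding p_def using cvS clS that by (rule closest_point_dot)
  define d where "d = y - p"
  have dnp: "d $ i \<le> 0" for i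
  proof -
    have "p + axis i 1 \<in> S" using pS unfolding S_def by (rule Shat_up)
    from dot[OF this] show ?thesis unfolding d_def by (simp add: inner_axis)
  qed
  have dne: "d \<noteq> 0" using yS pS unfolding d_def S_def by auto
  define s where "s = (\<Sum>i\<in>UNIV. - d $ i)"
  have s0: "s \<ge> 0" unfolding s_def using dnp by (intro sum_nonneg) (simp add: )
  have spos: "s > 0"
  proof (rule ccontr)
    assume "\<not> s > 0"
    hence "s = 0" using s0 by simp
    hence "\<forall>i\<in>UNIV. - d $ i = 0" unfolding s_def using dnp
      by (subst sum_nonneg_eq_0_iff[symmetric]) auto
    hence "d = 0" by (simp add: vec_eq_iff)
    thus False using dne by simp
  qed
  define beta where "beta = (- 1 / s) *\<^sub>R d"
  have betaS: "beta \<in> simplexm"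
  proof -
    have "\<forall>i. 0 \<le> beta $ i" unfolding beta_def using dnp spos
      by (simp add: divide_nonpos_pos)
    moreover have "(\<Sum>i\<in>UNIV. beta $ i) = (1 / s) * (\<Sum>i\<in>UNIV. - d $ i)"
      unfolding beta_def by (simp add: sum_distrib_left)
    hence "(\<Sum>i\<in>UNIV. beta $ i) = 1" using spos unfolding s_def[symmetric] by simp
    ultimately show ?thesis unfolding simplexm_iff by simp
  qed
  have dbeta: "d = (- s) *\<^sub>R beta" unfolding beta_def using spos by simp
  have bp: "inner beta p \<le> inner beta z" if "z \<in> S" for z
  proof -
    have "inner d (z - p) \<le> 0" using dot[OF that] unfolding d_def .
    hence "- s * inner beta (z - p) \<le> 0" unfolding dbeta by simp
    hence "inner beta (z - p) \<ge> 0" using spos by (simp add: zero_le_mult_iff)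
    thus ?thesis by (simp add: inner_diff_right)
  qed
  have pL: "inner beta p \<le> Lfun nu beta"
  proof (rule ccontr)
    assume "\<not> ?thesis"
    then obtain z where "z \<in> S" "inner beta z < Lfun nu beta + (inner beta p - Lfun nu beta)"
      using key'[OF betaS, of "inner beta p - Lfun nu beta"] by auto
    thus False using bp by fastforce
  qed
  obtain as where as: "Lfun nu beta = phi nu as beta" using Lfun_ex by blast
  define w where "w = (\<lambda>a. if a = as then 1 else (0::real))"
  have wD: "w \<in> distrs" unfolding distrs_def w_def by simp
  show "\<exists>w\<in>distrs. \<forall>Q. (\<forall>a. Q a \<in> distrs) \<longrightarrow>
      inner (y - closest_point (Shat nu R bsel) y) (payoff nu w Q - closest_point (Shat nu R bsel) y) \<le> 0"
  proof (intro bexI[OF _ wD] allI impI)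
    fix Q :: "'a \<Rightarrow> 'x \<Rightarrow> real" assume Q: "\<forall>a. Q a \<in> distrs"
    have pay: "payoff nu w Q = (\<chi> i. KL (Q as) (nu i as))"
      unfolding payoff_def w_def by (simp add: vec_eq_iff if_distrib[of "\<lambda>c. c * _"] sum.delta cong: if_cong)
    have "inner beta (payoff nu w Q) = (\<Sum>i\<in>UNIV. beta $ i * KL (Q as) (nu i as))"
      unfolding pay inner_vec_sum by simp
    also have "\<dots> \<ge> phi nu as beta" using gibbs[of nu, OF nu_pos betaS] Q by auto
    finally have "inner beta (payoff nu w Q - p) \<ge> 0" using pL as by (simp add: inner_diff_right)
    hence "inner d (payoff nu w Q - p) \<le> 0" unfolding dbeta using spos
      by (simp add: mult_le_0_iff)
    thus "inner (y - closest_point (Shat nu R bsel) y) (payoff nu w Q - closest_point (Shat nu R bsel) y) \<le> 0"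
      unfolding d_def p_def S_def .
  qed
qed

end
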